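(* Let $\mathcal{R}^{rsc}$ be a rich single-crossing domain of classical preferences on $\mathbb{Z}$, ordered by $\prec$. Then $(\mathcal{R}^{rsc},\prec)$ is a linear continuum, i.e. $\prec$ is a simple (linear) order, every nonempty subset of $\mathcal{R}^{rsc}$ that is bounded above (w.r.t. $\prec$) has a least upper bound in $\mathcal{R}^{rsc}$, and whenever $R'\prec R''$ there is $R\in\mathcal{R}^{rsc}$ with $R'\prec R\prec R''$. Moreover there is an order-preserving homeomorphism $h$ between $\mathcal{R}^{rsc}$ with the order topology and an open interval of $\mathbb{R}$ (hence $\mathbb{R}$) with the Euclidean topology; in particular the order topology on $\mathcal{R}^{rsc}$ is metrizable.
   Context: Let $\mathbb{Z}=[0,\infty)\times[0,1]$, with elements $(t,q)$ ($t$ a payment, $q$ a share or winning probability). For $x'=(t',q'),x''=(t'',q'')$ write $x'<x''$ if $t'<t''$ and $q'<q''$, and $x'\le x''$ if $x'=x''$ or $x'<x''$. A preference is a complete transitive binary relation $R$ on $\mathbb{Z}$ with strict part $P$ and indifference $I$ (decorations on $R$ carry over to $P,I$). Let $UC(R,z)=\{x:xRz\}$, $LC(R,z)=\{x:zRx\}$, $IC(R,z)=\{x:xIz\}$. $R$ is classical if: for all $q$, $t''>t'$ implies $(t',q)P(t'',q)$; for all $t$, $q''>q'$ implies $(t,q'')P(t,q')$; and $UC(R,z),LC(R,z)$ are closed in $\mathbb{Z}$ for every $z$. Two distinct classical preferences $R',R''$ satisfy the single-crossing property if for all $x,y\in\mathbb{Z}$ the set $IC(R',x)\cap IC(R'',y)$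 has at most one element. A rich single-crossing domain $\mathcal{R}^{rsc}$ is a set of classical preferences any two distinct members of which satisfy the single-crossing property, and such that for all $x'<x''$ there is $R\in\mathcal{R}^{rsc}$ with $x'Ix''$. For $z\in\mathbb{Z}$ let $\square(z)=\{x\in\mathbb{Z}:x\le z\}$; $R''$ cuts $R'$ from above at $z$ if $\square(z)\cap UC(R'',z)\subseteq\square(z)\cap UC(R',z)$. It is a known fact that for distinct $R',R''\in\mathcal{R}^{rsc}$, if $R''$ cuts $R'$ from above at some bundle $(t,q)$ with $t>0,q>0$, then it does so at every bundle. For distinct $R',R''\in\mathcal{R}^{rsc}$ write $R'\prec R''$ if $R''$ cuts $R'$ from above at every $z\in\mathbb{Z}$. The order topology on $\mathcal{R}^{rsc}$ is generated by the open intervals $]R',R''[=\{R:R'\prec R\prec R''\}$ together with the open rays. *)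

theory Defs
  imports "HOL-Analysis.Analysis"
begin

type_synonym bndl = "real \<times> real"
type_synonym pref = "bndl rel"

definition ZZ :: "bndl set" where
  "ZZ = {(t,q). 0 \<le> t \<and> 0 \<le> q \<and> q \<le> 1}"

definition bless :: "bndl \<Rightarrow> bndl \<Rightarrow> bool" where
  "bless x y \<longleftrightarrow> fst x < fst y \<and> snd x < snd y"

definition bleq :: "bndl \<Rightarrow> bndl \<Rightarrow> bool" where
  "bleq x y \<longleftrightarrow> x = y \<or> bless x y"

definition is_pref :: "pref \<Rightarrow> bool" where
  "is_pref R \<longleftrightarrow> R \<subseteq> ZZ \<times> ZZ
     \<and> (\<forall>x\<in>ZZ. \<forall>y\<in>ZZ. (x,y) \<in> R \<or> (y,x) \<in> R)
     \<and> trans R"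

definition sP :: "pref \<Rightarrow> bndl \<Rightarrow> bndl \<Rightarrow> bool" where
  "sP R x y \<longleftrightarrow> (x,y) \<in> R \<and> (y,x) \<notin> R"

definition sI :: "pref \<Rightarrow> bndl \<Rightarrow> bndl \<Rightarrow> bool" where
  "sI R x y \<longleftrightarrow> (x,y) \<in> R \<and> (y,x) \<in> R"

definition UC :: "pref \<Rightarrow> bndl \<Rightarrow> bndl set" where
  "UC R z = {x. (x,z) \<in> R}"

definition LC :: "pref \<Rightarrow> bndl \<Rightarrow> bndl set" where
  "LC R z = {x. (z,x) \<in> R}"

definition IC :: "pref \<Rightarrow> bndl \<Rightarrow> bndl set" where
  "IC R z = {x. sI R x z}"

definition classical :: "pref \<Rightarrow> bool" where
  "classical R \<longleftrightarrow> is_pref R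
     \<and> (\<forall>q t' t''. 0 \<le> q \<and> q \<le> 1 \<and> 0 \<le> t' \<and> t' < t'' \<longrightarrow> sP R (t',q) (t'',q))
     \<and> (\<forall>t q' q''. 0 \<le> t \<and> 0 \<le> q' \<and> q' < q'' \<and> q'' \<le> 1 \<longrightarrow> sP R (t,q'') (t,q'))
     \<and> (\<forall>z\<in>ZZ. closedin (subtopology euclidean ZZ) (UC R z)
               \<and> closedin (subtopology euclidean ZZ) (LC R z))"

definition single_crossing :: "pref \<Rightarrow> pref \<Rightarrow> bool" where
  "single_crossing R' R'' \<longleftrightarrow>
     (\<forall>x\<in>ZZ. \<forall>y\<in>ZZ. \<forall>a b. a \<in> IC R' x \<inter> IC R'' y \<and> b \<in> IC R' x \<inter> IC R'' y \<longrightarrow> a = b)"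

definition rich_single_crossing :: "pref set \<Rightarrow> bool" where
  "rich_single_crossing D \<longleftrightarrow>
     (\<forall>R\<in>D. classical R)
     \<and> (\<forall>R'\<in>D. \<forall>R''\<in>D. R' \<noteq> R'' \<longrightarrow> single_crossing R' R'')
     \<and> (\<forall>x'\<in>ZZ. \<forall>x''\<in>ZZ. bless x' x'' \<longrightarrow> (\<exists>R\<in>D. sI R x' x''))"

definition box :: "bndl \<Rightarrow> bndl set" where
  "box z = {x\<in>ZZ. bleq x z}"

definition cuts_from_above :: "pref \<Rightarrow> pref \<Rightarrow> bndl \<Rightarrow> bool" where
  "cuts_from_above R'' R' z \<longleftrightarrow> box z \<inter> UC R'' z \<subseteq> box z \<inter> UC R' z"

definition prec :: "pref \<Rightarrow> pref \<Rightarrow> bool" where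
  "prec R' R'' \<longleftrightarrow> R' \<noteq> R'' \<and> (\<forall>z\<in>ZZ. cuts_from_above R'' R' z)"

definition preceq :: "pref \<Rightarrow> pref \<Rightarrow> bool" where
  "preceq R' R'' \<longleftrightarrow> R' = R'' \<or> prec R' R''"

text \<open>Order topology on D generated by open intervals and open rays (D itself is
  added as a generator, which is harmless: it is open in any case).\<close>
definition order_top :: "pref set \<Rightarrow> pref topology" where
  "order_top D = topology_generated_by
     ({D}
      \<union> {{R\<in>D. prec R' R \<and> prec R R''} | R' R''. R' \<in> D \<and> R'' \<in> D}
      \<union> {{R\<in>D. prec R R''} | R''. R'' \<in> D}
      \<union> {{R\<in>D. prec R' R} | R'. R' \<in> D})"

end

theory Submission
  imports Defs
begin


definition NW :: "bndl \<Rightarrow> bndl \<Rightarrow> bool" where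
  "NW u v \<longleftrightarrow> fst u \<le> fst v \<and> snd v \<le> snd u"

lemma cl_pref: "classical R \<Longrightarrow> is_pref R" by (simp add: classical_def)

lemma cl_sub: "classical R \<Longrightarrow> (x,y) \<in> R \<Longrightarrow> x \<in> ZZ \<and> y \<in> ZZ"
  unfolding classical_def is_pref_def by blast

lemma cl_total: "classical R \<Longrightarrow> x \<in> ZZ \<Longrightarrow> y \<in> ZZ \<Longrightarrow> (x,y) \<in> R \<or> (y,x) \<in> R"
  unfolding classical_def is_pref_def by blast

lemma cl_refl: "classical R \<Longrightarrow> x \<in> ZZ \<Longrightarrow> (x,x) \<in> R"
  using cl_total by blast

lemma cl_trans: "classical R \<Longrightarrow> (x,y) \<in> R \<Longrightarrow> (y,z) \<in> R \<Longrightarrow> (x,z) \<in> R"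
  unfolding classical_def is_pref_def trans_def by blast

lemma sP_trans: "classical R \<Longrightarrow> sP R a b \<Longrightarrow> sP R b c \<Longrightarrow> sP R a c"
  unfolding sP_def by (meson cl_trans)
lemma sP_sI: "classical R \<Longrightarrow> sP R a b \<Longrightarrow> sI R b c \<Longrightarrow> sP R a c"
  unfolding sP_def sI_def by (meson cl_trans)
lemma sI_sP: "classical R \<Longrightarrow> sI R a b \<Longrightarrow> sP R b c \<Longrightarrow> sP R a c"
  unfolding sP_def sI_def by (meson cl_trans)
lemma sI_sym: "sI R a b \<Longrightarrow> sI R b a" unfolding sI_def by auto
lemma sP_asym: "sP R a b \<Longrightarrow> sP R b a \<Longrightarrow> False" unfolding sP_def by auto
lemma sP_irrefl: "sP R a a \<Longrightarrow> False" unfolding sP_def by auto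
lemma sP_sI_False: "sP R a b \<Longrightarrow> sI R a b \<Longrightarrow> False" unfolding sP_def sI_def by auto

lemma ZZ_iff: "x \<in> ZZ \<longleftrightarrow> 0 \<le> fst x \<and> 0 \<le> snd x \<and> snd x \<le> 1"
  by (cases x) (auto simp: ZZ_def)

lemma mono_M:
  assumes R: "classical R" and x: "x \<in> ZZ" and y: "y \<in> ZZ" and nw: "NW x y" and ne: "x \<noteq> y"
  shows "sP R x y"
proof -
  obtain a b where xab: "x = (a,b)" by (cases x)
  obtain c d where ycd: "y = (c,d)" by (cases y)
  have ab: "0 \<le> a" "0 \<le> b" "b \<le> 1" using x xab ZZ_iff by auto
  have cd: "0 \<le> c" "0 \<le> d" "d \<le> 1" using y ycd ZZ_iff by auto
  have le: "a \<le> c" "d \<le> b" using nw xab ycd NW_def by auto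
  have t: "\<And>q t' t''. 0 \<le> q \<Longrightarrow> q \<le> 1 \<Longrightarrow> 0 \<le> t' \<Longrightarrow> t' < t'' \<Longrightarrow> sP R (t',q) (t'',q)"
    using R classical_def by blast
  have q: "\<And>t q' q''. 0 \<le> t \<Longrightarrow> 0 \<le> q' \<Longrightarrow> q' < q'' \<Longrightarrow> q'' \<le> 1 \<Longrightarrow> sP R (t,q'') (t,q')"
    using R classical_def by blast
  show ?thesis
  proof (cases "a < c")
    case True
    then have 1: "sP R (a,b) (c,b)" using t ab by auto
    show ?thesis
    proof (cases "d < b")
      case True
      then have "sP R (c,b) (c,d)" using q cd ab by auto
      then show ?thesis using sP_trans[OF R 1] xab ycd by simp
    next
      case False then have "d = b" using le by auto
      then show ?thesis using 1 xab ycd by simp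
    qed
  next
    case False
    then have "a = c" using le by auto
    then have "d < b" using ne le xab ycd by auto
    then show ?thesis using q cd ab \<open>a = c\<close> xab ycd by auto
  qed
qed

lemma crossing:
  assumes R: "classical R" and S: "connected S" "S \<subseteq> ZZ" and a: "a \<in> S" "(a,z) \<in> R"
    and b: "b \<in> S" "(z,b) \<in> R" and z: "z \<in> ZZ"
  shows "\<exists>w\<in>S. sI R w z"
proof -
  have "closedin (top_of_set ZZ) (UC R z)" "closedin (top_of_set ZZ) (LC R z)"
    using R z classical_def by auto
  then obtain C1 C2 where C: "closed C1" "UC R z = ZZ \<inter> C1" "closed C2" "LC R z = ZZ \<inter> C2"
    by (auto simp: closedin_closed)
  have cov: "S \<subseteq> C1 \<union> C2"
  proof
    fix x assume "x \<in> S"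
    then have "x \<in> ZZ" using S by auto
    then have "(x,z) \<in> R \<or> (z,x) \<in> R" using cl_total[OF R _ z] by auto
    then show "x \<in> C1 \<union> C2" using C \<open>x \<in> ZZ\<close> by (auto simp: UC_def LC_def)
  qed
  have "a \<in> C1" "b \<in> C2" using C a b by (auto simp: UC_def LC_def)
  then have "C1 \<inter> C2 \<inter> S \<noteq> {}"
    using S(1) cov C a b unfolding connected_closed by blast
  then obtain w where w: "w \<in> S" "w \<in> C1" "w \<in> C2" by auto
  then have "w \<in> UC R z" "w \<in> LC R z" using C S by auto
  then show ?thesis using w by (auto simp: UC_def LC_def sI_def)
qed

lemma open_avoid:
  assumes "closedin (top_of_set ZZ) C" "w \<in> ZZ" "w \<notin> C"
  shows "\<exists>e>0. \<forall>w'\<in>ZZ. dist w' w < e \<longrightarrow> w' \<notin> C"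
proof -
  obtain T where T: "closed T" "C = ZZ \<inter> T" using assms(1) by (auto simp: closedin_closed)
  then have "w \<notin> T" using assms by auto
  then obtain e where "e > 0" "ball w e \<subseteq> - T"
    using T(1) open_contains_ball[of "- T"] by (auto simp: closed_def)
  then show ?thesis using T by (auto simp: dist_commute ball_def)
qed

lemma spL:
  assumes R: "classical R" and "sP R x y"
  shows "\<exists>e>0. \<forall>x'\<in>ZZ. dist x' x < e \<longrightarrow> sP R x' y"
proof -
  have xy: "x \<in> ZZ" "y \<in> ZZ" using assms cl_sub unfolding sP_def by blast+
  have "closedin (top_of_set ZZ) (LC R y)" using R xy classical_def by auto
  moreover have "x \<notin> LC R y" using assms by (auto simp: LC_def sP_def)
  ultimately obtain e where e: "e>0" "\<forall>w'\<in>ZZ. dist w' x < e \<longrightarrow> w' \<notin> LC R y"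
    using open_avoid xy by blast
  show ?thesis
    using e cl_total[OF R _ xy(2)] by (auto simp: LC_def sP_def intro!: exI[of _ e])
qed

lemma spR:
  assumes R: "classical R" and "sP R x y"
  shows "\<exists>e>0. \<forall>y'\<in>ZZ. dist y' y < e \<longrightarrow> sP R x y'"
proof -
  have xy: "x \<in> ZZ" "y \<in> ZZ" using assms cl_sub unfolding sP_def by blast+
  have "closedin (top_of_set ZZ) (UC R x)" using R xy classical_def by auto
  moreover have "y \<notin> UC R x" using assms by (auto simp: UC_def sP_def)
  ultimately obtain e where e: "e>0" "\<forall>w'\<in>ZZ. dist w' y < e \<longrightarrow> w' \<notin> UC R x"
    using open_avoid xy by blast
  show ?thesis
    using e cl_total[OF R xy(1)] by (auto simp: UC_def sP_def intro!: exI[of _ e])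
qed

lemma gen_conn:
  fixes U :: "'a::metric_space set"
  assumes "connected U" "\<forall>x\<in>U. P x \<or> Q x" "\<forall>x\<in>U. \<not> (P x \<and> Q x)"
    "\<forall>x\<in>U. P x \<longrightarrow> (\<exists>e>0. \<forall>x'\<in>U. dist x' x < e \<longrightarrow> P x')"
    "\<forall>x\<in>U. Q x \<longrightarrow> (\<exists>e>0. \<forall>x'\<in>U. dist x' x < e \<longrightarrow> Q x')"
  shows "(\<forall>x\<in>U. P x) \<or> (\<forall>x\<in>U. Q x)"
proof -
  have "openin (top_of_set U) {x\<in>U. P x}" "openin (top_of_set U) {x\<in>U. Q x}"
    using assms(4,5) by (auto simp: openin_euclidean_subtopology_iff)
  then show ?thesis using assms(1,2,3) unfolding connected_openin by blast
qed



definition Prow :: "real \<Rightarrow> real \<Rightarrow> real \<Rightarrow> bndl set" where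
  "Prow zt zq q = (\<lambda>r. (0,r)) ` {q..zq} \<union> (\<lambda>t. (t,q)) ` {0..zt}"

lemma Prow_iff: "w \<in> Prow zt zq q \<longleftrightarrow>
   (fst w = 0 \<and> q \<le> snd w \<and> snd w \<le> zq) \<or> (snd w = q \<and> 0 \<le> fst w \<and> fst w \<le> zt)"
  by (cases w) (auto simp: Prow_def image_iff)

context
  fixes zt zq q :: real
  assumes zt: "0 < zt" and zq: "0 < zq" "zq \<le> 1" and q: "0 \<le> q" "q < zq"
begin

lemma Prow_sub: "Prow zt zq q \<subseteq> ZZ"
  using zt zq q by (auto simp: Prow_iff ZZ_iff)

lemma Prow_conn: "connected (Prow zt zq q)"
  unfolding Prow_def
  apply (rule connected_Un)
    apply (rule connected_continuous_image, intro continuous_intros, simp)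
   apply (rule connected_continuous_image, intro continuous_intros, simp)
proof -
  have "(0,q) \<in> (\<lambda>r. (0::real,r)) ` {q..zq}" using q by auto
  moreover have "(0,q) \<in> (\<lambda>t. (t,q)) ` {0..zt}" using zt by (auto simp: image_iff)
  ultimately show "(\<lambda>r. (0::real,r)) ` {q..zq} \<inter> (\<lambda>t. (t,q)) ` {0..zt} \<noteq> {}" by blast
qed

lemma Prow_cmp: "u \<in> Prow zt zq q \<Longrightarrow> v \<in> Prow zt zq q \<Longrightarrow> NW u v \<or> NW v u"
  by (auto simp: Prow_iff NW_def prod_eq_iff)

lemma Prow_notz: "(zt,zq) \<notin> Prow zt zq q"
  using zt q by (auto simp: Prow_iff)

lemma Prow_top: "(0,zq) \<in> Prow zt zq q" using q by (auto simp: Prow_iff)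
lemma Prow_bot: "(zt,q) \<in> Prow zt zq q" using zt by (auto simp: Prow_iff)

lemma zZZ: "(zt,zq) \<in> ZZ" using zt zq by (auto simp: ZZ_iff)

lemma top_better: "classical R \<Longrightarrow> sP R (0,zq) (zt,zq)"
  by (rule mono_M) (use zt zq in \<open>auto simp: ZZ_iff NW_def\<close>)

lemma bot_worse: "classical R \<Longrightarrow> sP R (zt,zq) (zt,q)"
  by (rule mono_M) (use zt zq q in \<open>auto simp: ZZ_iff NW_def\<close>)

lemma cross_row: "classical R \<Longrightarrow> \<exists>w\<in>Prow zt zq q. sI R w (zt,zq)"
  apply (rule crossing[OF _ Prow_conn Prow_sub Prow_top _ Prow_bot _ zZZ])
  using top_better bot_worse by (auto simp: sP_def)

lemma between:
  assumes u: "u \<in> Prow zt zq q" and v: "v \<in> Prow zt zq q" and nw: "NW u v" and ne: "u \<noteq> v"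
  shows "\<exists>m\<in>Prow zt zq q. NW u m \<and> NW m v \<and> m \<noteq> u \<and> m \<noteq> v"
proof (cases "fst u = 0 \<and> fst v = 0")
  case True
  then have "snd u \<noteq> snd v" using ne by (cases u, cases v) auto
  then show ?thesis using True u v nw
    by (intro bexI[of _ "(0, (snd u + snd v)/2)"]) (auto simp: Prow_iff NW_def prod_eq_iff)
next
  case F1: False
  show ?thesis
  proof (cases "snd u = q \<and> snd v = q")
    case True
    then have "fst u \<noteq> fst v" using ne by (cases u, cases v) auto
    then show ?thesis using True u v nw
      by (intro bexI[of _ "((fst u + fst v)/2, q)"]) (auto simp: Prow_iff NW_def prod_eq_iff)
  next
    case False
    then show ?thesis using F1 u v nw
      by (intro bexI[of _ "(0, q)"]) (auto simp: Prow_iff NW_def prod_eq_iff)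
  qed
qed

end

definition Typ :: "pref \<Rightarrow> pref \<Rightarrow> real \<Rightarrow> real \<Rightarrow> real \<Rightarrow> bool" where
  "Typ Ra Rb zt zq q \<longleftrightarrow> (\<exists>w\<in>Prow zt zq q. sP Ra w (zt,zq) \<and> sP Rb (zt,zq) w)"

definition Wit :: "pref \<Rightarrow> pref \<Rightarrow> bndl \<Rightarrow> bool" where
  "Wit Ra Rb z \<longleftrightarrow> (\<exists>m\<in>ZZ. bless m z \<and> sP Ra m z \<and> sP Rb z m)"

lemma SC:
  assumes D: "rich_single_crossing D" and R: "R1 \<in> D" "R2 \<in> D" "R1 \<noteq> R2"
    and z: "z \<in> ZZ" and w: "sI R1 w z" "sI R2 w z"
  shows "w = z"
proof -
  have sc: "single_crossing R1 R2" using D R by (auto simp: rich_single_crossing_def)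
  have c: "classical R1" "classical R2" using D R by (auto simp: rich_single_crossing_def)
  have "w \<in> IC R1 z \<inter> IC R2 z" "z \<in> IC R1 z \<inter> IC R2 z"
    using w cl_refl[OF c(1) z] cl_refl[OF c(2) z] by (auto simp: IC_def sI_def)
  then show ?thesis using sc z unfolding single_crossing_def by blast
qed



lemma R_sP: "classical R \<Longrightarrow> (a,b) \<in> R \<Longrightarrow> sP R b c \<Longrightarrow> sP R a c"
  unfolding sP_def by (meson cl_trans)
lemma sP_R: "classical R \<Longrightarrow> sP R a b \<Longrightarrow> (b,c) \<in> R \<Longrightarrow> sP R a c"
  unfolding sP_def by (meson cl_trans)

lemma connected_Ico_real: "connected {a..<b::real}"
  by (simp add: is_interval_connected_1 [symmetric])

context
  fixes zt zq :: real
  assumes zt: "0 < zt" and zq: "0 < zq" "zq \<le> 1"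
begin

lemma zZ: "(zt,zq) \<in> ZZ" using zt zq by (auto simp: ZZ_iff)

lemma excl:
  assumes Ra: "classical Ra" and Rb: "classical Rb" and q: "0 \<le> q" "q < zq"
  shows "\<not> (Typ Ra Rb zt zq q \<and> Typ Rb Ra zt zq q)"
proof
  assume "Typ Ra Rb zt zq q \<and> Typ Rb Ra zt zq q"
  then obtain w w' where w: "w \<in> Prow zt zq q" "sP Ra w (zt,zq)" "sP Rb (zt,zq) w"
    and w': "w' \<in> Prow zt zq q" "sP Rb w' (zt,zq)" "sP Ra (zt,zq) w'"
    unfolding Typ_def by blast
  have ZZ: "w \<in> ZZ" "w' \<in> ZZ" using Prow_sub[OF zt zq q] w w' by auto
  show False
  proof (cases "w = w'")
    case True then show ?thesis using w w' sP_asym by blast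
  next
    case False
    from Prow_cmp[OF zt zq q w(1) w'(1)] show ?thesis
    proof
      assume "NW w w'"
      then have "sP Rb w w'" using mono_M[OF Rb ZZ] False by auto
      moreover have "sP Rb w' w" using sP_trans[OF Rb w'(2) w(3)] .
      ultimately show False using sP_asym by blast
    next
      assume "NW w' w"
      then have "sP Ra w' w" using mono_M[OF Ra ZZ(2,1)] False by auto
      moreover have "sP Ra w w'" using sP_trans[OF Ra w(2) w'(3)] .
      ultimately show False using sP_asym by blast
    qed
  qed
qed

lemma T12:
  assumes D: "rich_single_crossing D" and R: "R1 \<in> D" "R2 \<in> D" "R1 \<noteq> R2"
    and q: "0 \<le> q" "q < zq"
  shows "Typ R1 R2 zt zq q \<or> Typ R2 R1 zt zq q"
proof -
  have c: "classical R1" "classical R2" using D R by (auto simp: rich_single_crossing_def)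
  obtain w1 where w1: "w1 \<in> Prow zt zq q" "sI R1 w1 (zt,zq)" using cross_row[OF zt zq q c(1)] by blast
  obtain w2 where w2: "w2 \<in> Prow zt zq q" "sI R2 w2 (zt,zq)" using cross_row[OF zt zq q c(2)] by blast
  have ne: "w1 \<noteq> w2"
  proof
    assume "w1 = w2"
    then have "w1 = (zt,zq)" using SC[OF D R zZ w1(2)] w2(2) by auto
    then show False using w1(1) Prow_notz[OF zt zq q] by simp
  qed
  have ZZ: "w1 \<in> ZZ" "w2 \<in> ZZ" using Prow_sub[OF zt zq q] w1 w2 by auto
  from Prow_cmp[OF zt zq q w1(1) w2(1)] show ?thesis
  proof
    assume nw: "NW w1 w2"
    obtain m where m: "m \<in> Prow zt zq q" "NW w1 m" "NW m w2" "m \<noteq> w1" "m \<noteq> w2"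
      using between[OF zt zq q w1(1) w2(1) nw ne] by blast
    have mZ: "m \<in> ZZ" using Prow_sub[OF zt zq q] m by auto
    have "sP R1 w1 m" using mono_M[OF c(1) ZZ(1) mZ m(2)] m(4) by auto
    then have 1: "sP R1 (zt,zq) m" using sI_sP[OF c(1) sI_sym[OF w1(2)]] by blast
    have "sP R2 m w2" using mono_M[OF c(2) mZ ZZ(2) m(3)] m(5) by auto
    then have 2: "sP R2 m (zt,zq)" using sP_sI[OF c(2) _ w2(2)] by blast
    show ?thesis using 1 2 m(1) unfolding Typ_def by blast
  next
    assume nw: "NW w2 w1"
    obtain m where m: "m \<in> Prow zt zq q" "NW w2 m" "NW m w1" "m \<noteq> w2" "m \<noteq> w1"
      using between[OF zt zq q w2(1) w1(1) nw ne[symmetric]] by blast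
    have mZ: "m \<in> ZZ" using Prow_sub[OF zt zq q] m by auto
    have "sP R2 w2 m" using mono_M[OF c(2) ZZ(2) mZ m(2)] m(4) by auto
    then have 1: "sP R2 (zt,zq) m" using sI_sP[OF c(2) sI_sym[OF w2(2)]] by blast
    have "sP R1 m w1" using mono_M[OF c(1) mZ ZZ(1) m(3)] m(5) by auto
    then have 2: "sP R1 m (zt,zq)" using sP_sI[OF c(1) _ w1(2)] by blast
    show ?thesis using 1 2 m(1) unfolding Typ_def by blast
  qed
qed

lemma Typ_open:
  assumes Ra: "classical Ra" and Rb: "classical Rb" and q: "0 \<le> q" "q < zq"
    and T: "Typ Ra Rb zt zq q"
  shows "\<exists>e>0. \<forall>q'\<in>{0..<zq}. dist q' q < e \<longrightarrow> Typ Ra Rb zt zq q'"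
proof -
  obtain w where w: "w \<in> Prow zt zq q" "sP Ra w (zt,zq)" "sP Rb (zt,zq) w"
    using T unfolding Typ_def by blast
  obtain e1 where e1: "e1 > 0" "\<forall>x'\<in>ZZ. dist x' w < e1 \<longrightarrow> sP Ra x' (zt,zq)"
    using spL[OF Ra w(2)] by blast
  obtain e2 where e2: "e2 > 0" "\<forall>x'\<in>ZZ. dist x' w < e2 \<longrightarrow> sP Rb (zt,zq) x'"
    using spR[OF Rb w(3)] by blast
  show ?thesis
  proof (intro exI[of _ "min e1 e2"] conjI ballI impI)
    show "0 < min e1 e2" using e1 e2 by simp
    fix q' assume q': "q' \<in> {0..<zq}" and d: "dist q' q < min e1 e2"
    define w' where "w' = (if snd w = q then (fst w, q') else (fst w, max (snd w) q'))"
    have w'P: "w' \<in> Prow zt zq q'" using w(1) q' unfolding w'_def Prow_iff by auto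
    have "w' \<in> ZZ" using Prow_sub[of zt zq q'] zt zq q' w'P by auto
    moreover have "dist w' w \<le> dist q' q"
    proof (cases "snd w = q")
      case True then show ?thesis
        by (cases w) (simp add: w'_def dist_Pair_Pair)
    next
      case False
      then have "snd w \<ge> q" using w(1) Prow_iff by auto
      then have "dist (max (snd w) q') (snd w) \<le> dist q' q"
        by (auto simp: dist_real_def max_def)
      then show ?thesis using False
        by (cases w) (simp add: w'_def dist_Pair_Pair)
    qed
    ultimately show "Typ Ra Rb zt zq q'"
      using e1 e2 d w'P unfolding Typ_def by (meson le_less_trans min_less_iff_conj)
  qed
qed

lemma Typ_Wit:
  assumes Ra: "classical Ra" and Rb: "classical Rb" and q: "0 \<le> q" "q < zq"
    and T: "Typ Ra Rb zt zq q"
  shows "Wit Ra Rb (zt,zq)"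
proof -
  obtain w where w: "w \<in> Prow zt zq q" "sP Ra w (zt,zq)" "sP Rb (zt,zq) w"
    using T unfolding Typ_def by blast
  have wZ: "w \<in> ZZ" using Prow_sub[OF zt zq q] w by auto
  have "fst w \<noteq> zt"
  proof
    assume "fst w = zt"
    then have "w = (zt,q)" using w(1) zt by (cases w) (auto simp: Prow_iff)
    then show False using w(2) bot_worse[OF zt zq q Ra] sP_asym by blast
  qed
  moreover have "snd w \<noteq> zq"
  proof
    assume "snd w = zq"
    then have "w = (0,zq)" using w(1) q by (cases w) (auto simp: Prow_iff)
    then show False using w(3) top_better[OF zt zq q Rb] sP_asym by blast
  qed
  ultimately have "bless w (zt,zq)" using w(1) q zt unfolding bless_def Prow_iff by auto
  then show ?thesis unfolding Wit_def using wZ w by blast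
qed

lemma Wit_Typ:
  assumes W: "Wit Ra Rb (zt,zq)"
  shows "\<exists>q\<in>{0..<zq}. Typ Ra Rb zt zq q"
proof -
  obtain m where m: "m \<in> ZZ" "bless m (zt,zq)" "sP Ra m (zt,zq)" "sP Rb (zt,zq) m"
    using W unfolding Wit_def by blast
  have "m \<in> Prow zt zq (snd m)" using m(1,2) by (auto simp: Prow_iff ZZ_iff bless_def)
  then show ?thesis using m by (auto simp: Typ_def ZZ_iff bless_def intro!: bexI[of _ "snd m"])
qed

lemma Wit_not_both:
  assumes D: "rich_single_crossing D" and R: "R1 \<in> D" "R2 \<in> D" "R1 \<noteq> R2"
  shows "\<not> (Wit R1 R2 (zt,zq) \<and> Wit R2 R1 (zt,zq))"
proof
  assume W: "Wit R1 R2 (zt,zq) \<and> Wit R2 R1 (zt,zq)"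
  have c: "classical R1" "classical R2" using D R by (auto simp: rich_single_crossing_def)
  obtain q1 where q1: "q1 \<in> {0..<zq}" "Typ R1 R2 zt zq q1" using Wit_Typ W by blast
  obtain q2 where q2: "q2 \<in> {0..<zq}" "Typ R2 R1 zt zq q2" using Wit_Typ W by blast
  have "(\<forall>x\<in>{0..<zq}. Typ R1 R2 zt zq x) \<or> (\<forall>x\<in>{0..<zq}. Typ R2 R1 zt zq x)"
    apply (rule gen_conn[OF connected_Ico_real])
    using T12[OF D R] excl[OF c] excl[OF c(2,1)] Typ_open[OF c] Typ_open[OF c(2,1)] by auto
  then show False using q1 q2 excl[OF c] by auto
qed

lemma Wit_one:
  assumes D: "rich_single_crossing D" and R: "R1 \<in> D" "R2 \<in> D" "R1 \<noteq> R2"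
  shows "Wit R1 R2 (zt,zq) \<or> Wit R2 R1 (zt,zq)"
proof -
  have c: "classical R1" "classical R2" using D R by (auto simp: rich_single_crossing_def)
  show ?thesis using T12[OF D R, of 0] zq Typ_Wit[OF c, of 0] Typ_Wit[OF c(2,1), of 0] by auto
qed

lemma W_lemma:
  assumes D: "rich_single_crossing D" and R: "Ra \<in> D" "Rb \<in> D" "Ra \<noteq> Rb"
    and nc: "\<not> cuts_from_above Ra Rb (zt,zq)"
  shows "Wit Ra Rb (zt,zq)"
proof -
  have c: "classical Ra" "classical Rb" using D R by (auto simp: rich_single_crossing_def)
  obtain x where x: "x \<in> box (zt,zq)" "(x,(zt,zq)) \<in> Ra" "(x,(zt,zq)) \<notin> Rb"
    using nc unfolding cuts_from_above_def UC_def by blast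
  have "x \<noteq> (zt,zq)" using x(3) cl_refl[OF c(2) zZ] by auto
  then have xb: "bless x (zt,zq)" "x \<in> ZZ" using x(1) by (auto simp: box_def bleq_def)
  have q: "0 \<le> snd x" "snd x < zq" using xb by (auto simp: bless_def ZZ_iff)
  have xP: "x \<in> Prow zt zq (snd x)" using xb by (auto simp: Prow_iff ZZ_iff bless_def)
  have sx: "sP Rb (zt,zq) x" using x(3) cl_total[OF c(2) xb(2) zZ] by (auto simp: sP_def)
  have "\<not> Typ Rb Ra zt zq (snd x)"
  proof
    assume "Typ Rb Ra zt zq (snd x)"
    then obtain w where w: "w \<in> Prow zt zq (snd x)" "sP Rb w (zt,zq)" "sP Ra (zt,zq) w"
      unfolding Typ_def by blast
    have wZ: "w \<in> ZZ" using Prow_sub[OF zt zq q] w by auto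
    have 1: "sP Ra x w" using R_sP[OF c(1) x(2) w(3)] .
    have 2: "sP Rb w x" using sP_trans[OF c(2) w(2) sx] .
    show False
    proof (cases "x = w")
      case True then show ?thesis using 1 sP_irrefl by blast
    next
      case False
      from Prow_cmp[OF zt zq q xP w(1)] show False
      proof
        assume "NW x w" then show False using mono_M[OF c(2) xb(2) wZ] False 2 sP_asym by blast
      next
        assume "NW w x" then show False using mono_M[OF c(1) wZ xb(2)] False 1 sP_asym by blast
      qed
    qed
  qed
  then have "Typ Ra Rb zt zq (snd x)" using T12[OF D R q] by blast
  then show ?thesis using Typ_Wit[OF c q] by blast
qed

end



lemma Wit_not_cuts:
  assumes "classical Ra" "classical Rb" "Wit Ra Rb z"
  shows "\<not> cuts_from_above Ra Rb z"
  using assms unfolding Wit_def cuts_from_above_def box_def bleq_def UC_def sP_def by blast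

lemma boundary_cuts:
  assumes Rb: "classical Rb" and z: "z \<in> ZZ" and nb: "\<not> (0 < fst z \<and> 0 < snd z)"
  shows "cuts_from_above Ra Rb z"
proof -
  have "box z \<subseteq> {z}" using nb by (auto simp: box_def bleq_def bless_def ZZ_iff)
  then show ?thesis using cl_refl[OF Rb z] unfolding cuts_from_above_def UC_def by auto
qed

definition Intr :: "bndl set" where "Intr = {0<..} \<times> {0<..1}"

lemma Intr_conn: "connected Intr"
  unfolding Intr_def by (intro convex_connected convex_Times) auto

lemma Intr_iff: "z \<in> Intr \<longleftrightarrow> z \<in> ZZ \<and> 0 < fst z \<and> 0 < snd z"
  by (cases z) (auto simp: Intr_def ZZ_iff)

lemma Wit_open:
  assumes Ra: "classical Ra" and Rb: "classical Rb" and W: "Wit Ra Rb z"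
  shows "\<exists>e>0. \<forall>z'\<in>Intr. dist z' z < e \<longrightarrow> Wit Ra Rb z'"
proof -
  obtain m where m: "m \<in> ZZ" "bless m z" "sP Ra m z" "sP Rb z m"
    using W unfolding Wit_def by blast
  obtain e1 where e1: "e1 > 0" "\<forall>x'\<in>ZZ. dist x' z < e1 \<longrightarrow> sP Ra m x'"
    using spR[OF Ra m(3)] by blast
  obtain e2 where e2: "e2 > 0" "\<forall>x'\<in>ZZ. dist x' z < e2 \<longrightarrow> sP Rb x' m"
    using spL[OF Rb m(4)] by blast
  define e3 where "e3 = min (fst z - fst m) (snd z - snd m)"
  have e3: "e3 > 0" using m(2) by (auto simp: e3_def bless_def)
  show ?thesis
  proof (intro exI[of _ "min e1 (min e2 e3)"] conjI ballI impI)
    show "0 < min e1 (min e2 e3)" using e1 e2 e3 by simp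
    fix z' assume z': "z' \<in> Intr" and d: "dist z' z < min e1 (min e2 e3)"
    have zZ: "z' \<in> ZZ" using z' Intr_iff by auto
    have "dist (fst z') (fst z) < e3" "dist (snd z') (snd z) < e3"
      using d dist_fst_le[of z' z] dist_snd_le[of z' z] by linarith+
    then have "bless m z'" unfolding bless_def e3_def dist_real_def by auto
    then show "Wit Ra Rb z'" unfolding Wit_def using m(1) e1 e2 d zZ by auto
  qed
qed

context
  fixes D assumes D: "rich_single_crossing D"
begin

lemma clD: "R \<in> D \<Longrightarrow> classical R" using D by (auto simp: rich_single_crossing_def)

lemma linear:
  assumes R: "R1 \<in> D" "R2 \<in> D" "R1 \<noteq> R2"
  shows "prec R1 R2 \<or> prec R2 R1"
proof -
  have c: "classical R1" "classical R2" using R clD by auto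
  have R': "R2 \<in> D" "R1 \<in> D" "R2 \<noteq> R1" using R by auto
  have int: "\<And>z. z \<in> Intr \<Longrightarrow> (\<exists>zt zq. z = (zt,zq) \<and> 0 < zt \<and> 0 < zq \<and> zq \<le> 1)"
    by (auto simp: Intr_def)
  have "(\<forall>z\<in>Intr. Wit R1 R2 z) \<or> (\<forall>z\<in>Intr. Wit R2 R1 z)"
  proof (rule gen_conn[OF Intr_conn])
    show "\<forall>x\<in>Intr. Wit R1 R2 x \<or> Wit R2 R1 x"
    proof
      fix x assume "x \<in> Intr"
      then obtain zt zq where zz: "x = (zt,zq)" "0 < zt" "0 < zq" "zq \<le> 1" using int by blast
      show "Wit R1 R2 x \<or> Wit R2 R1 x" using Wit_one[OF zz(2-4) D R] zz(1) by simp
    qed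
    show "\<forall>x\<in>Intr. \<not> (Wit R1 R2 x \<and> Wit R2 R1 x)"
    proof
      fix x assume "x \<in> Intr"
      then obtain zt zq where zz: "x = (zt,zq)" "0 < zt" "0 < zq" "zq \<le> 1" using int by blast
      show "\<not> (Wit R1 R2 x \<and> Wit R2 R1 x)" using Wit_not_both[OF zz(2-4) D R] zz(1) by simp
    qed
    show "\<forall>x\<in>Intr. Wit R1 R2 x \<longrightarrow> (\<exists>e>0. \<forall>x'\<in>Intr. dist x' x < e \<longrightarrow> Wit R1 R2 x')"
      using Wit_open[OF c] by blast
    show "\<forall>x\<in>Intr. Wit R2 R1 x \<longrightarrow> (\<exists>e>0. \<forall>x'\<in>Intr. dist x' x < e \<longrightarrow> Wit R2 R1 x')"
      using Wit_open[OF c(2,1)] by blast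
  qed
  then show ?thesis
  proof
    assume A: "\<forall>z\<in>Intr. Wit R1 R2 z"
    have "cuts_from_above R2 R1 z" if z: "z \<in> ZZ" for z
    proof (cases "0 < fst z \<and> 0 < snd z")
      case True
      then have zi: "z \<in> Intr" using z Intr_iff by auto
      then obtain zt zq where zz: "z = (zt,zq)" "0 < zt" "0 < zq" "zq \<le> 1" using int by blast
      have "\<not> Wit R2 R1 z" using A zi Wit_not_both[OF zz(2-4) D R] zz(1) by auto
      then show ?thesis using W_lemma[OF zz(2-4) D R'] zz(1) by auto
    next
      case False then show ?thesis using boundary_cuts[OF c(1) z] by auto
    qed
    then show ?thesis using R unfolding prec_def by auto
  next
    assume A: "\<forall>z\<in>Intr. Wit R2 R1 z"
    have "cuts_from_above R1 R2 z" if z: "z \<in> ZZ" for z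
    proof (cases "0 < fst z \<and> 0 < snd z")
      case True
      then have zi: "z \<in> Intr" using z Intr_iff by auto
      then obtain zt zq where zz: "z = (zt,zq)" "0 < zt" "0 < zq" "zq \<le> 1" using int by blast
      have "\<not> Wit R1 R2 z" using A zi Wit_not_both[OF zz(2-4) D R] zz(1) by auto
      then show ?thesis using W_lemma[OF zz(2-4) D R] zz(1) by auto
    next
      case False then show ?thesis using boundary_cuts[OF c(2) z] by auto
    qed
    then show ?thesis using R unfolding prec_def by auto
  qed
qed

lemma not_both_cuts:
  assumes R: "R1 \<in> D" "R2 \<in> D" "R1 \<noteq> R2"
  shows "\<not> (cuts_from_above R1 R2 (1,1) \<and> cuts_from_above R2 R1 (1,1))"
  using Wit_one[of 1 1, OF _ _ _ D R] Wit_not_cuts clD R by fastforce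

lemma prec_trans:
  assumes R: "R1 \<in> D" "R2 \<in> D" "R3 \<in> D" and p: "prec R1 R2" "prec R2 R3"
  shows "prec R1 R3"
proof -
  have "R1 \<noteq> R3"
  proof
    assume "R1 = R3"
    then have "cuts_from_above R1 R2 (1,1)" "cuts_from_above R2 R1 (1,1)"
      using p by (auto simp: prec_def ZZ_iff)
    then show False using not_both_cuts R p by (auto simp: prec_def)
  qed
  then show ?thesis using p unfolding prec_def cuts_from_above_def by blast
qed

end



definition S0 :: "bndl set" where "S0 = (\<lambda>s. (s, 1 - s)) ` {0..1}"

lemma S0_iff: "w \<in> S0 \<longleftrightarrow> 0 \<le> fst w \<and> fst w \<le> 1 \<and> snd w = 1 - fst w"
  by (cases w) (auto simp: S0_def image_iff)

lemma S0_sub: "S0 \<subseteq> ZZ" by (auto simp: S0_iff ZZ_iff)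

lemma S0_conn: "connected S0"
  unfolding S0_def by (rule connected_continuous_image) (intro continuous_intros, simp)

lemma z0: "(1,1) \<in> ZZ" by (simp add: ZZ_iff)

definition cr :: "pref \<Rightarrow> bndl" where "cr R = (SOME w. w \<in> S0 \<and> sI R w (1,1))"
definition hh :: "pref \<Rightarrow> real" where "hh R = snd (cr R)"

lemma cr_ex:
  assumes R: "classical R" shows "cr R \<in> S0 \<and> sI R (cr R) (1,1)"
proof -
  have a: "sP R (0,1) (1,1)" by (rule mono_M[OF R]) (auto simp: ZZ_iff NW_def)
  have b: "sP R (1,1) (1,0)" by (rule mono_M[OF R]) (auto simp: ZZ_iff NW_def)
  have "\<exists>w\<in>S0. sI R w (1,1)"
    by (rule crossing[OF R S0_conn S0_sub _ _ _ _ z0, of "(0,1)" "(1,0)"])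
       (use a b in \<open>auto simp: S0_iff sP_def\<close>)
  then show ?thesis unfolding cr_def by (metis (mono_tags, lifting) someI_ex)
qed

lemma cr_unique:
  assumes R: "classical R" and w: "w \<in> S0" "sI R w (1,1)"
  shows "w = cr R"
proof (rule ccontr)
  assume ne: "w \<noteq> cr R"
  have c: "cr R \<in> S0" "sI R (cr R) (1,1)" using cr_ex[OF R] by auto
  have ZZ: "w \<in> ZZ" "cr R \<in> ZZ" using S0_sub w c by auto
  have "NW w (cr R) \<or> NW (cr R) w" using w c by (auto simp: S0_iff NW_def)
  then show False
  proof
    assume "NW w (cr R)"
    then have "sP R w (cr R)" using mono_M[OF R ZZ] ne by auto
    then show False using w(2) c(2) unfolding sP_def sI_def by (meson R cl_trans)
  next
    assume "NW (cr R) w"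
    then have "sP R (cr R) w" using mono_M[OF R ZZ(2,1)] ne by auto
    then show False using w(2) c(2) unfolding sP_def sI_def by (meson R cl_trans)
  qed
qed

lemma cr_bless:
  assumes R: "classical R" shows "bless (cr R) (1,1)" "cr R \<in> ZZ"
proof -
  have c: "cr R \<in> S0" "sI R (cr R) (1,1)" using cr_ex[OF R] by auto
  have a: "sP R (0,1) (1,1)" by (rule mono_M[OF R]) (auto simp: ZZ_iff NW_def)
  have b: "sP R (1,1) (1,0)" by (rule mono_M[OF R]) (auto simp: ZZ_iff NW_def)
  have "cr R \<noteq> (0,1)" using a c(2) sP_sI_False by metis
  moreover have "cr R \<noteq> (1,0)" using b c(2) sP_sI_False sI_sym by metis
  ultimately show "bless (cr R) (1,1)" using c(1) by (cases "cr R") (auto simp: S0_iff bless_def)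
  show "cr R \<in> ZZ" using c S0_sub by auto
qed

lemma hh_range: "classical R \<Longrightarrow> 0 < hh R \<and> hh R < 1"
  using cr_bless[of R] cr_ex[of R] by (auto simp: hh_def bless_def S0_iff)

context
  fixes D assumes D: "rich_single_crossing D"
begin

lemma hh_inj:
  assumes R: "R1 \<in> D" "R2 \<in> D" and h: "hh R1 = hh R2" shows "R1 = R2"
proof (rule ccontr)
  assume ne: "R1 \<noteq> R2"
  have c: "classical R1" "classical R2" using R clD[OF D] by auto
  have "cr R1 = cr R2" using h cr_ex[OF c(1)] cr_ex[OF c(2)]
    by (auto simp: hh_def S0_iff prod_eq_iff)
  then have "cr R1 = (1,1)" using SC[OF D R ne z0] cr_ex[OF c(1)] cr_ex[OF c(2)] by auto
  then show False using cr_ex[OF c(1)] by (auto simp: S0_iff)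
qed

lemma hh_mono:
  assumes R: "R1 \<in> D" "R2 \<in> D" and p: "prec R1 R2" shows "hh R1 < hh R2"
proof (rule ccontr)
  assume "\<not> hh R1 < hh R2"
  then have le: "hh R2 \<le> hh R1" by simp
  have c: "classical R1" "classical R2" using R clD[OF D] by auto
  have ne: "cr R1 \<noteq> cr R2" using hh_inj[OF R] p by (auto simp: prec_def hh_def)
  have cut: "cuts_from_above R2 R1 (1,1)" using p z0 by (auto simp: prec_def)
  have "cr R2 \<in> box (1,1)" using cr_bless[OF c(2)] by (auto simp: box_def bleq_def)
  moreover have "(cr R2, (1,1)) \<in> R2" using cr_ex[OF c(2)] by (auto simp: sI_def)
  ultimately have in1: "(cr R2, (1,1)) \<in> R1" using cut by (auto simp: cuts_from_above_def UC_def)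
  have "NW (cr R1) (cr R2)" using le cr_ex[OF c(1)] cr_ex[OF c(2)] by (auto simp: hh_def S0_iff NW_def)
  then have "sP R1 (cr R1) (cr R2)" using mono_M[OF c(1) cr_bless(2)[OF c(1)] cr_bless(2)[OF c(2)]] ne by auto
  then have "sP R1 (1,1) (cr R2)" using sI_sP[OF c(1) sI_sym] cr_ex[OF c(1)] by blast
  then show False using in1 by (auto simp: sP_def)
qed

lemma hh_surj:
  assumes x: "0 < x" "x < 1" shows "\<exists>R\<in>D. hh R = x"
proof -
  have "bless (1-x, x) (1,1)" "(1-x,x) \<in> ZZ" using x by (auto simp: bless_def ZZ_iff)
  then obtain R where R: "R \<in> D" "sI R (1-x,x) (1,1)"
    using D z0 unfolding rich_single_crossing_def by blast
  have "(1-x,x) = cr R" using cr_unique[OF clD[OF D R(1)] _ R(2)] x by (auto simp: S0_iff)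
  then have "hh R = x" unfolding hh_def by (metis snd_conv)
  then show ?thesis using R by blast
qed

lemma prec_iff:
  assumes R: "R1 \<in> D" "R2 \<in> D" shows "prec R1 R2 \<longleftrightarrow> hh R1 < hh R2"
proof
  assume "hh R1 < hh R2"
  then have "R1 \<noteq> R2" by auto
  then have "prec R1 R2 \<or> prec R2 R1" using linear[OF D R] by auto
  then show "prec R1 R2" using hh_mono[OF R(2,1)] \<open>hh R1 < hh R2\<close> by auto
qed (rule hh_mono[OF R])

lemma hh_image: "hh ` D = {0<..<1}"
  using hh_range clD[OF D] hh_surj by (auto simp: image_iff) (metis)

end



context
  fixes D assumes D: "rich_single_crossing D"
begin

definition BB :: "pref set set" where
  "BB = ({D}
      \<union> {{R\<in>D. prec R' R \<and> prec R R''} | R' R''. R' \<in> D \<and> R'' \<in> D}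
      \<union> {{R\<in>D. prec R R''} | R''. R'' \<in> D}
      \<union> {{R\<in>D. prec R' R} | R'. R' \<in> D})"

lemma ot: "order_top D = topology_generated_by BB" unfolding order_top_def BB_def ..

lemma BB_sub: "b \<in> BB \<Longrightarrow> b \<subseteq> D" unfolding BB_def by auto

lemma top_ot: "topspace (order_top D) = D"
  unfolding ot topology_generated_by_topspace using BB_sub by (auto simp: BB_def)

lemma hh_inj_on: "inj_on hh D" using hh_inj[OF D] by (auto simp: inj_on_def)

lemma img_set: "hh ` {R\<in>D. P (hh R)} = hh ` D \<inter> {x. P x}" by auto

lemma gen_img:
  "generate_topology_on BB V \<Longrightarrow> V \<subseteq> D \<and> openin (top_of_set (hh ` D)) (hh ` V)"
proof (induction rule: generate_topology_on.induct)
  case Empty then show ?case by auto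
next
  case (Int a b)
  then show ?case using inj_on_image_Int[OF hh_inj_on, of a b] by auto
next
  case (UN K)
  then show ?case by (auto simp: image_Union)
next
  case (Basis s)
  have sD: "s \<subseteq> D" using BB_sub Basis by auto
  have "openin (top_of_set (hh ` D)) (hh ` s)"
  proof -
    consider "s = D"
      | R' R'' where "R' \<in> D" "R'' \<in> D" "s = {R\<in>D. prec R' R \<and> prec R R''}"
      | R'' where "R'' \<in> D" "s = {R\<in>D. prec R R''}"
      | R' where "R' \<in> D" "s = {R\<in>D. prec R' R}"
      using Basis unfolding BB_def by blast
    then show ?thesis
    proof cases
      case 1 then show ?thesis by simp
    next
      case 2
      then have "s = {R\<in>D. hh R \<in> {hh R'<..<hh R''}}" using prec_iff[OF D] by auto
      then have "hh ` s = hh ` D \<inter> {hh R'<..<hh R''}" by auto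
      then show ?thesis by auto
    next
      case 3
      then have "s = {R\<in>D. hh R \<in> {..<hh R''}}" using prec_iff[OF D] by auto
      then have "hh ` s = hh ` D \<inter> {..<hh R''}" by auto
      then show ?thesis by auto
    next
      case 4
      then have "s = {R\<in>D. hh R \<in> {hh R'<..}}" using prec_iff[OF D] by auto
      then have "hh ` s = hh ` D \<inter> {hh R'<..}" by auto
      then show ?thesis by auto
    qed
  qed
  then show ?case using sD by auto
qed

lemma homeo: "homeomorphic_map (order_top D) (top_of_set (hh ` D)) hh"
  unfolding homeomorphic_map_def quotient_map_def top_ot
proof (intro conjI allI impI hh_inj_on)
  show "hh ` D = topspace (top_of_set (hh ` D))" by simp
  fix U assume U: "U \<subseteq> topspace (top_of_set (hh ` D))"
  then have U': "U \<subseteq> {0<..<1}" using hh_image[OF D] by simp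
  show "openin (order_top D) {x \<in> D. hh x \<in> U} = openin (top_of_set (hh ` D)) U"
  proof
    assume "openin (order_top D) {x \<in> D. hh x \<in> U}"
    then have "generate_topology_on BB {x \<in> D. hh x \<in> U}"
      unfolding ot openin_topology_generated_by_iff .
    then have "openin (top_of_set (hh ` D)) (hh ` {x \<in> D. hh x \<in> U})" using gen_img by blast
    moreover have "hh ` {x \<in> D. hh x \<in> U} = U" using U by auto
    ultimately show "openin (top_of_set (hh ` D)) U" by simp
  next
    assume O: "openin (top_of_set (hh ` D)) U"
    show "openin (order_top D) {x \<in> D. hh x \<in> U}"
    proof (subst openin_subopen, intro ballI)
      fix R assume R: "R \<in> {x \<in> D. hh x \<in> U}"
      then obtain e where e: "e > 0" "\<forall>x'\<in>hh ` D. dist x' (hh R) < e \<longrightarrow> x' \<in> U"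
        using O unfolding openin_euclidean_subtopology_iff by blast
      have hr: "0 < hh R" "hh R < 1" using R U' by auto
      define a where "a = max (hh R - e/2) (hh R / 2)"
      define b where "b = min (hh R + e/2) ((hh R + 1) / 2)"
      have ab: "0 < a" "a < hh R" "hh R < b" "b < 1" using hr e unfolding a_def b_def by (auto simp: min_def max_def)
      obtain Ra where Ra: "Ra \<in> D" "hh Ra = a" using hh_surj[OF D, of a] ab by auto
      obtain Rb where Rb: "Rb \<in> D" "hh Rb = b" using hh_surj[OF D, of b] ab by auto
      define T where "T = {R'\<in>D. prec Ra R' \<and> prec R' Rb}"
      have "T \<in> BB" unfolding T_def BB_def using Ra Rb by blast
      then have "openin (order_top D) T" unfolding ot openin_topology_generated_by_iff
        by (rule generate_topology_on.Basis)
      moreover have "R \<in> T" using R Ra Rb ab prec_iff[OF D] unfolding T_def by auto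
      moreover have "T \<subseteq> {x \<in> D. hh x \<in> U}"
      proof
        fix R' assume "R' \<in> T"
        then have R': "R' \<in> D" "a < hh R'" "hh R' < b" using Ra Rb prec_iff[OF D] unfolding T_def by auto
        have "dist (hh R') (hh R) < e" using R' unfolding a_def b_def dist_real_def by auto
        then show "R' \<in> {x \<in> D. hh x \<in> U}" using e R' by auto
      qed
      ultimately show "\<exists>T. openin (order_top D) T \<and> R \<in> T \<and> T \<subseteq> {x \<in> D. hh x \<in> U}" by blast
    qed
  qed
qed

end



lemma preceq_iff:
  assumes D: "rich_single_crossing D" and R: "R1 \<in> D" "R2 \<in> D"
  shows "preceq R1 R2 \<longleftrightarrow> hh R1 \<le> hh R2"
  using prec_iff[OF D R] hh_inj[OF D R] unfolding preceq_def by auto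

theorem theorem1:
  fixes D :: "pref set"
  assumes "rich_single_crossing D"
  shows "(\<forall>R\<in>D. \<not> prec R R)
     \<and> (\<forall>R1\<in>D. \<forall>R2\<in>D. \<forall>R3\<in>D. prec R1 R2 \<and> prec R2 R3 \<longrightarrow> prec R1 R3)
     \<and> (\<forall>R1\<in>D. \<forall>R2\<in>D. R1 \<noteq> R2 \<longrightarrow> prec R1 R2 \<or> prec R2 R1)
     \<and> (\<forall>S. S \<subseteq> D \<and> S \<noteq> {} \<and> (\<exists>b\<in>D. \<forall>s\<in>S. preceq s b) \<longrightarrow>
          (\<exists>u\<in>D. (\<forall>s\<in>S. preceq s u) \<and> (\<forall>v\<in>D. (\<forall>s\<in>S. preceq s v) \<longrightarrow> preceq u v)))
     \<and> (\<forall>R1\<in>D. \<forall>R2\<in>D. prec R1 R2 \<longrightarrow> (\<exists>R\<in>D. prec R1 R \<and> prec R R2))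
     \<and> (\<exists>h :: pref \<Rightarrow> real. \<exists>a b :: ereal. a < b
          \<and> h ` D = {x. a < ereal x \<and> ereal x < b}
          \<and> (\<forall>R1\<in>D. \<forall>R2\<in>D. prec R1 R2 \<longrightarrow> h R1 < h R2)
          \<and> homeomorphic_map (order_top D) (subtopology euclideanreal (h ` D)) h)
     \<and> metrizable_space (order_top D)"
proof -
  note D = assms
  have c: "\<And>R. R \<in> D \<Longrightarrow> classical R" using clD[OF D] .
  have P1: "\<forall>R\<in>D. \<not> prec R R" by (simp add: prec_def)
  have P2: "\<forall>R1\<in>D. \<forall>R2\<in>D. \<forall>R3\<in>D. prec R1 R2 \<and> prec R2 R3 \<longrightarrow> prec R1 R3"
    using prec_trans[OF D] by blast
  have P3: "\<forall>R1\<in>D. \<forall>R2\<in>D. R1 \<noteq> R2 \<longrightarrow> prec R1 R2 \<or> prec R2 R1"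
    using linear[OF D] by blast
  have P4: "\<forall>S. S \<subseteq> D \<and> S \<noteq> {} \<and> (\<exists>b\<in>D. \<forall>s\<in>S. preceq s b) \<longrightarrow>
          (\<exists>u\<in>D. (\<forall>s\<in>S. preceq s u) \<and> (\<forall>v\<in>D. (\<forall>s\<in>S. preceq s v) \<longrightarrow> preceq u v))"
  proof (intro allI impI)
    fix S assume A: "S \<subseteq> D \<and> S \<noteq> {} \<and> (\<exists>b\<in>D. \<forall>s\<in>S. preceq s b)"
    then obtain b where b: "b \<in> D" "\<forall>s\<in>S. preceq s b" by blast
    have SD: "S \<subseteq> D" "S \<noteq> {}" using A by auto
    have hb: "\<forall>s\<in>S. hh s \<le> hh b" using b SD preceq_iff[OF D] by blast
    have bdd: "bdd_above (hh ` S)" using hb by (auto intro: bdd_aboveI2)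
    define \<sigma> where "\<sigma> = Sup (hh ` S)"
    obtain s0 where s0: "s0 \<in> S" using SD by auto
    have up: "\<forall>s\<in>S. hh s \<le> \<sigma>" unfolding \<sigma>_def using bdd by (auto intro: cSup_upper)
    have "\<sigma> \<le> hh b" unfolding \<sigma>_def using hb SD by (auto intro: cSup_least)
    moreover have "0 < hh s0" using hh_range c s0 SD by blast
    moreover have "hh b < 1" using hh_range c b by blast
    ultimately have "0 < \<sigma>" "\<sigma> < 1" using up s0 by force+
    then obtain u where u: "u \<in> D" "hh u = \<sigma>" using hh_surj[OF D] by blast
    show "\<exists>u\<in>D. (\<forall>s\<in>S. preceq s u) \<and> (\<forall>v\<in>D. (\<forall>s\<in>S. preceq s v) \<longrightarrow> preceq u v)"
    proof (intro bexI[OF _ u(1)] conjI ballI impI)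
      fix s assume "s \<in> S" then show "preceq s u" using up u SD preceq_iff[OF D] by auto
    next
      fix v assume v: "v \<in> D" "\<forall>s\<in>S. preceq s v"
      then have "\<forall>s\<in>S. hh s \<le> hh v" using SD preceq_iff[OF D] by blast
      then have "\<sigma> \<le> hh v" unfolding \<sigma>_def using SD by (auto intro: cSup_least)
      then show "preceq u v" using u v preceq_iff[OF D] by auto
    qed
  qed
  have P5: "\<forall>R1\<in>D. \<forall>R2\<in>D. prec R1 R2 \<longrightarrow> (\<exists>R\<in>D. prec R1 R \<and> prec R R2)"
  proof (intro ballI impI)
    fix R1 R2 assume R: "R1 \<in> D" "R2 \<in> D" "prec R1 R2"
    then have l: "hh R1 < hh R2" using prec_iff[OF D] by auto
    have "0 < (hh R1 + hh R2)/2" "(hh R1 + hh R2)/2 < 1" using hh_range c R l by force+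
    then obtain R where R3: "R \<in> D" "hh R = (hh R1 + hh R2)/2" using hh_surj[OF D] by blast
    then have "prec R1 R" "prec R R2" using prec_iff[OF D] R l by auto
    then show "\<exists>R\<in>D. prec R1 R \<and> prec R R2" using R3 by blast
  qed
  have hD: "hh ` D = {x. 0 < ereal x \<and> ereal x < 1}" using hh_image[OF D] by auto
  have P6: "\<exists>h :: pref \<Rightarrow> real. \<exists>a b :: ereal. a < b
          \<and> h ` D = {x. a < ereal x \<and> ereal x < b}
          \<and> (\<forall>R1\<in>D. \<forall>R2\<in>D. prec R1 R2 \<longrightarrow> h R1 < h R2)
          \<and> homeomorphic_map (order_top D) (subtopology euclideanreal (h ` D)) h"
    apply (rule exI[of _ hh], rule exI[of _ 0], rule exI[of _ 1])
    using hD prec_iff[OF D] homeo[OF D] by auto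
  have "order_top D homeomorphic_space top_of_set (hh ` D)"
    using homeo[OF D] homeomorphic_map_maps homeomorphic_space_def by blast
  then have P7: "metrizable_space (order_top D)"
    using homeomorphic_metrizable_space metrizable_space_subtopology metrizable_space_euclidean by blast
  show ?thesis using P1 P2 P3 P4 P5 P6 P7 by blast
qed


end
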